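(* Assume (A1)–(A5) hold and let $\{u_k\}_{k\ge0}$ be the exact-data iteration defined below. Then $\{u_k\}_{k\ge0}$ converges to a solution $u^\dagger$ of $\mathcal F(u)=v$.
   Context: Spaces and operator. Let $\mathcal U=\mathbb R^N$ and $\mathcal V=\mathbb R^M$ carry the Euclidean inner product and norm. Let $\mathcal F:\mathcal D(\mathcal F)\subset\mathcal U\to\mathcal V$ be a (possibly nonlinear) operator, let $v\in\mathcal V$ be exact data, and let $\mathcal B_r(x)$ denote the closed ball of radius $r$ centred at $x$. Images and graph Laplacian. Elements of $\mathcal U$ are images on a pixel grid $\mathcal S=\{1,\dots,p\}\times\{1,\dots,q\}$ with $N=pq$. Fix $R\in(0,\infty)$, $\lambda>0$ and a metric $d$ on $\mathcal S$. For $u\in\mathcal U$, define $$(W_u)_{ab}=\mathbf 1_{(0,R]}(d(a,b))\exp(-|u(a)-u(b)|^2/\lambda),$$ let $D_u$ be the diagonal matrix of row sums of $W_u$, and set $\Delta_u=D_u-W_u$. Exact-data iteration. Let $\Psi:\mathcal V\to\mathcal U$ be a reconstruction map and set $u_0=\Psi(v)$. Define $$u_{k+1}=u_k-\alpha_k\mathcal F'(u_k)^*(\mathcal F(u_k)-v)-\beta_k\Delta_{u_k}u_k,$$ with $$\alpha_k=\min\Big\{\frac{\zeta_0\|\mathcal F(u_k)-v\|}{\|\mathcal F'(u_k)^*(\mathcal F(u_k)-v)\|},\zeta_1\Big\}.$$ If $\|\Delta_{u_k}u_k\|\ne0$, then $$\beta_k=\min\Big\{\frac{\nu_0\|\mathcal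 F(u_k)-v\|^2}{\|\Delta_{u_k}u_k\|},\frac{\nu_1}{\|\Delta_{u_k}u_k\|},\nu_2\Big\},$$ and otherwise $\beta_k=0$. Here $\zeta_0,\zeta_1,\nu_0,\nu_1,\nu_2>0$ are constants, and $\zeta>0$ is a constant with $\zeta\le\alpha_k$ for all $k$. Operator assumptions. There exist $\wp>0$, $B>0$, $\eta\in[0,1)$ and $L\ge0$ such that for all $u,w\in\mathcal B_{3\wp}(u_0)\subset\mathcal D(\mathcal F)$: - (A1) $\mathcal F$ is Fréchet differentiable with $u\mapsto\mathcal F'(u)$ continuous; - (A2) $\|\mathcal F'(u)\|\le B$; - (A3) $\|\mathcal F(u)-\mathcal F(w)-\mathcal F'(w)(u-w)\|\le\eta\|\mathcal F(u)-\mathcal F(w)\|$; - (A4) $\|\mathcal F'(u)-\mathcal F'(w)\|\le L\|u-w\|$; - (A5) there exists $u^\dagger\in\mathcal B_\wp(u_0)$ with $\mathcal F(u^\dagger)=v$. Standing parameter condition. Fix $\mathcal H>\frac{1+\eta}{1-\eta}$, and assume $$\zeta>\frac{\nu_0(\wp+\nu_1)+\zeta_0^2}{1-\eta-\frac{1+\eta}{\mathcal H}} .$$ *)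

theory Defs
  imports "HOL-Analysis.Analysis"
begin

text \<open>Images are vectors indexed by the pixel grid, modelled by a product
of two finite types.\<close>

definition graph_W ::
  "('i::finite \<Rightarrow> 'i \<Rightarrow> real) \<Rightarrow> real \<Rightarrow> real \<Rightarrow> real^'i \<Rightarrow> real^'i^'i" where
  "graph_W d R lam u =
     (\<chi> a b. (if 0 < d a b \<and> d a b \<le> R then 1 else 0) * exp (- ((abs (u$a - u$b)) ^ 2) / lam))"

definition graph_D ::
  "('i::finite \<Rightarrow> 'i \<Rightarrow> real) \<Rightarrow> real \<Rightarrow> real \<Rightarrow> real^'i \<Rightarrow> real^'i^'i" where
  "graph_D d R lam u =
     (\<chi> a b. if a = b then (\<Sum>c\<in>UNIV. graph_W d R lam u $ a $ c) else 0)"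

definition graph_Lap ::
  "('i::finite \<Rightarrow> 'i \<Rightarrow> real) \<Rightarrow> real \<Rightarrow> real \<Rightarrow> real^'i \<Rightarrow> real^'i^'i" where
  "graph_Lap d R lam u = graph_D d R lam u - graph_W d R lam u"

definition is_metric_on_grid :: "('i \<Rightarrow> 'i \<Rightarrow> real) \<Rightarrow> bool" where
  "is_metric_on_grid d \<longleftrightarrow>
     (\<forall>a b. 0 \<le> d a b) \<and> (\<forall>a b. d a b = 0 \<longleftrightarrow> a = b) \<and>
     (\<forall>a b. d a b = d b a) \<and> (\<forall>a b c. d a c \<le> d a b + d b c)"

end

theory Submission
  imports Defs
begin

lemma nd: fixes x y :: "'a::real_inner"
  shows "norm (x - y)^2 = norm x^2 - 2*(x \<bullet> y) + norm y^2"
  unfolding power2_norm_eq_inner by (simp add: inner_diff_left inner_diff_right inner_commute)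

lemma step_ineq:
  fixes e g h :: "'a::real_inner"
  assumes a0: "0 \<le> a" and ag: "a * norm g \<le> z0 * nr"
    and eg: "(1-\<eta>)*nr^2 \<le> e \<bullet> g" and h1: "norm h \<le> n0 * nr^2" and h2: "norm h \<le> n1"
    and zz: "z0^2 \<le> 2*a*(1-\<eta>)" and n0: "0\<le>n0" and nr: "0 \<le> nr"
  shows "norm (e - a *\<^sub>R g - h)^2 \<le> norm e^2 - (2*a*(1-\<eta>) - z0^2 - 2*norm e*n0 - n1*n0)*nr^2"
proof -
  have e1: "norm (e - a *\<^sub>R g)^2 = norm e^2 - 2*a*(e \<bullet> g) + a^2 * norm g^2"
    by (simp add: nd power_mult_distrib)
  have "(a * norm g)^2 \<le> (z0*nr)^2" using ag a0 by (intro power_mono) auto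
  hence e2: "a^2 * norm g^2 \<le> z0^2*nr^2" by (simp add: power_mult_distrib)
  have "a*((1-\<eta>)*nr^2) \<le> a*(e \<bullet> g)" using eg a0
    by (rule mult_left_mono)
  hence e3: "norm (e - a *\<^sub>R g)^2 \<le> norm e^2 - (2*a*(1-\<eta>) - z0^2)*nr^2"
  proof -
    have "(2*a*(1-\<eta>) - z0^2)*nr^2 = 2*(a*((1-\<eta>)*nr^2)) - z0^2*nr^2" by (simp add: algebra_simps)
    thus ?thesis using e1 e2 \<open>a*((1-\<eta>)*nr^2) \<le> a*(e \<bullet> g)\<close> by linarith
  qed
  have "0 \<le> (2*a*(1-\<eta>) - z0^2)*nr^2" using zz by simp
  hence "norm (e - a *\<^sub>R g)^2 \<le> norm e^2" using e3 by linarith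
  hence e4: "norm (e - a *\<^sub>R g) \<le> norm e" using power2_le_imp_le[OF _ norm_ge_zero] by blast
  define w where "w = e - a *\<^sub>R g"
  have e5: "norm (w - h)^2 = norm w^2 - 2*(w \<bullet> h) + norm h^2"
    by (rule nd)
  have "-(w \<bullet> h) \<le> norm w * norm h"
    using Cauchy_Schwarz_ineq2[of w h] by linarith
  also have "\<dots> \<le> norm e * (n0*nr^2)" using e4 h1 unfolding w_def
    by (intro mult_mono) auto
  finally have e6: "-(w \<bullet> h) \<le> norm e * (n0*nr^2)" .
  have "norm h^2 = norm h * norm h" by (simp add: power2_eq_square)
  also have "\<dots> \<le> n1 * (n0 * nr^2)"
  proof -
    have "0 \<le> n1" using h2 norm_ge_zero[of h] by linarith
    then show ?thesis using h1 h2 by (intro mult_mono) auto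
  qed
  finally have e7: "norm h^2 \<le> n1 * (n0 * nr^2)" .
  have "norm (w - h)^2 \<le> norm e^2 - (2*a*(1-\<eta>) - z0^2)*nr^2 + 2 * (norm e * (n0*nr^2)) + n1 * (n0 * nr^2)"
    using e3 e5 e6 e7 unfolding w_def[symmetric] by linarith
  moreover have "norm e^2 - (2*a*(1-\<eta>) - z0^2)*nr^2 + 2 * (norm e * (n0*nr^2)) + n1 * (n0 * nr^2)
     = norm e^2 - (2*a*(1-\<eta>) - z0^2 - 2*norm e*n0 - n1*n0)*nr^2" by (simp add: algebra_simps)
  ultimately show ?thesis unfolding w_def by linarith
qed

theorem mainTheorem4:
  fixes F :: "real^('p::finite \<times> 'q::finite) \<Rightarrow> real^'m::finite"
    and F' :: "real^('p \<times> 'q) \<Rightarrow> ((real^('p \<times> 'q)) \<Rightarrow>\<^sub>L (real^'m))"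
    and DF :: "(real^('p \<times> 'q)) set"
    and v :: "real^'m"
    and \<Psi> :: "real^'m \<Rightarrow> real^('p \<times> 'q)"
    and d :: "'p \<times> 'q \<Rightarrow> 'p \<times> 'q \<Rightarrow> real"
    and R lam :: real
    and u :: "nat \<Rightarrow> real^('p \<times> 'q)"
    and alpha beta :: "nat \<Rightarrow> real"
    and \<zeta>0 \<zeta>1 \<nu>0 \<nu>1 \<nu>2 \<zeta> :: real
    and rho B \<eta> L H :: real
  assumes R_pos: "0 < R" and lam_pos: "0 < lam"
    and d_metric: "is_metric_on_grid d"
    and u0: "u 0 = \<Psi> v"
    and iter: "\<forall>k. u (Suc k) = u k - alpha k *\<^sub>R adjoint (blinfun_apply (F' (u k))) (F (u k) - v)
                                    - beta k *\<^sub>R (graph_Lap d R lam (u k) *v u k)"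
    and alpha_def: "\<forall>k. alpha k = min (\<zeta>0 * norm (F (u k) - v)
                                         / norm (adjoint (blinfun_apply (F' (u k))) (F (u k) - v))) \<zeta>1"
    and beta_def: "\<forall>k. beta k =
         (if norm (graph_Lap d R lam (u k) *v u k) \<noteq> 0
          then min (min (\<nu>0 * (norm (F (u k) - v))^2 / norm (graph_Lap d R lam (u k) *v u k))
                        (\<nu>1 / norm (graph_Lap d R lam (u k) *v u k))) \<nu>2
          else 0)"
    and consts_pos: "0 < \<zeta>0" "0 < \<zeta>1" "0 < \<nu>0" "0 < \<nu>1" "0 < \<nu>2" "0 < \<zeta>"
    and zeta_le: "\<forall>k. \<zeta> \<le> alpha k"
    and wp_pos: "0 < rho" and B_pos: "0 < B" and eta: "0 \<le> \<eta>" "\<eta> < 1" and L_nonneg: "0 \<le> L"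
    and dom: "cball (u 0) (3 * rho) \<subseteq> DF"
    and A1_deriv: "\<forall>w\<in>cball (u 0) (3 * rho). (F has_derivative blinfun_apply (F' w)) (at w within DF)"
    and A1_cont: "continuous_on (cball (u 0) (3 * rho)) F'"
    and A2: "\<forall>w\<in>cball (u 0) (3 * rho). norm (F' w) \<le> B"
    and A3: "\<forall>x\<in>cball (u 0) (3 * rho). \<forall>w\<in>cball (u 0) (3 * rho).
               norm (F x - F w - blinfun_apply (F' w) (x - w)) \<le> \<eta> * norm (F x - F w)"
    and A4: "\<forall>x\<in>cball (u 0) (3 * rho). \<forall>w\<in>cball (u 0) (3 * rho).
               norm (F' x - F' w) \<le> L * norm (x - w)"
    and A5: "\<exists>us\<in>cball (u 0) rho. F us = v"
    and H_gt: "H > (1 + \<eta>) / (1 - \<eta>)"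
    and param: "\<zeta> > (\<nu>0 * (rho + \<nu>1) + \<zeta>0^2) / (1 - \<eta> - (1 + \<eta>) / H)"
  shows "\<exists>ud. ud \<in> DF \<and> F ud = v \<and> u \<longlonglongrightarrow> ud"
proof -
  define r where "r k = F (u k) - v" for k
  define g where "g k = adjoint (blinfun_apply (F' (u k))) (r k)" for k
  define h where "h k = beta k *\<^sub>R (graph_Lap d R lam (u k) *v u k)" for k
  define Bl where "Bl = cball (u 0) (3 * rho)"
  have it: "u (Suc k) = u k - alpha k *\<^sub>R g k - h k" for k
    unfolding g_def h_def r_def by (rule iter[rule_format])
  obtain us where us: "us \<in> cball (u 0) rho" "F us = v" using A5 by blast
  have z0: "0 < \<zeta>0" and z1: "0 < \<zeta>1" and n0: "0 < \<nu>0" and n1: "0 < \<nu>1" and n2: "0 < \<nu>2"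
    and zp: "0 < \<zeta>" using consts_pos by auto
  have alpha_pos: "0 < alpha k" for k using zeta_le zp by (meson less_le_trans)
  have hb: "norm (h k) \<le> \<nu>0 * norm (r k)^2 \<and> norm (h k) \<le> \<nu>1" for k
  proof (cases "norm (graph_Lap d R lam (u k) *v u k) = 0")
    case True
    then have "h k = 0" unfolding h_def by simp
    then show ?thesis using n0 n1 by simp
  next
    case False
    define n where "n = norm (graph_Lap d R lam (u k) *v u k)"
    have np: "0 < n" using False unfolding n_def by simp
    have bk: "beta k = min (min (\<nu>0 * (norm (r k))^2 / n) (\<nu>1 / n)) \<nu>2"
      using beta_def False unfolding n_def r_def by simp
    have b0: "0 \<le> beta k" unfolding bk using np n0 n1 n2 by simp
    have nh: "norm (h k) = beta k * n" unfolding h_def n_def using b0 by simp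
    have "beta k \<le> \<nu>0 * (norm (r k))^2 / n" "beta k \<le> \<nu>1 / n" unfolding bk by auto
    then have "beta k * n \<le> \<nu>0 * (norm (r k))^2" "beta k * n \<le> \<nu>1"
      using np by (simp_all add: pos_le_divide_eq)
    then show ?thesis unfolding nh by simp
  qed
  have ha: "alpha k * norm (g k) \<le> \<zeta>0 * norm (r k)" for k
  proof (cases "norm (g k) = 0")
    case True then show ?thesis using z0 by simp
  next
    case False
    have "alpha k \<le> \<zeta>0 * norm (r k) / norm (g k)"
      using alpha_def unfolding g_def r_def by (metis min.cobounded1)
    then show ?thesis using False by (simp add: pos_le_divide_eq)
  qed
  have key: "(1 - \<eta>) * norm (r k)^2 \<le> (u k - s) \<bullet> g k"
    if uk: "u k \<in> Bl" and s: "s \<in> Bl" and Fs: "F s = v" for k s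
  proof -
    have lin: "linear (blinfun_apply (F' (u k)))"
      using blinfun.bounded_linear_right bounded_linear.linear by blast
    define p where "p = blinfun_apply (F' (u k)) (u k - s)"
    have eq1: "(u k - s) \<bullet> g k = p \<bullet> r k" unfolding g_def p_def using adjoint_works[OF lin] by simp
    have "norm (F s - F (u k) - blinfun_apply (F' (u k)) (s - u k)) \<le> \<eta> * norm (F s - F (u k))"
      using A3 uk s unfolding Bl_def by blast
    moreover have "F s - F (u k) - blinfun_apply (F' (u k)) (s - u k) = p - r k"
      unfolding p_def r_def Fs by (simp add: blinfun.diff_right)
    moreover have "norm (F s - F (u k)) = norm (r k)" unfolding r_def Fs by (simp add: norm_minus_commute)
    ultimately have pr: "norm (p - r k) \<le> \<eta> * norm (r k)" by simp
    have "p \<bullet> r k = r k \<bullet> r k + (p - r k) \<bullet> r k" by (simp add: inner_diff_left)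
    moreover have "- ((p - r k) \<bullet> r k) \<le> norm (p - r k) * norm (r k)"
      using Cauchy_Schwarz_ineq2[of "p - r k" "r k"] by linarith
    moreover have "norm (p - r k) * norm (r k) \<le> \<eta> * norm (r k) * norm (r k)"
      using pr by (simp add: mult_right_mono)
    moreover have "r k \<bullet> r k = norm (r k)^2" by (simp add: power2_norm_eq_inner)
    ultimately have "(1 - \<eta>) * norm (r k)^2 \<le> p \<bullet> r k" by (simp add: algebra_simps power2_eq_square)
    then show ?thesis using eq1 by simp
  qed
  have "0 < (1 + \<eta>) / (1 - \<eta>)" using eta by simp
  then have Hpos: "0 < H" using H_gt by linarith
  have "(1 + \<eta>) / (1 - \<eta>) < H" using H_gt by simp
  then have "1 + \<eta> < H * (1 - \<eta>)" using eta by (simp add: divide_less_eq)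
  then have "(1 + \<eta>) / H < 1 - \<eta>" using Hpos by (simp add: divide_less_eq mult.commute)
  then have den: "0 < 1 - \<eta> - (1 + \<eta>) / H" by simp
  have denle: "1 - \<eta> - (1 + \<eta>) / H \<le> 1 - \<eta>" using Hpos eta by simp
  have "\<nu>0 * (rho + \<nu>1) + \<zeta>0^2 < \<zeta> * (1 - \<eta> - (1 + \<eta>) / H)"
    using param den by (simp add: divide_less_eq)
  also have "\<dots> \<le> \<zeta> * (1 - \<eta>)" using denle zp by (simp add: mult_left_mono)
  finally have P: "\<nu>0 * (rho + \<nu>1) + \<zeta>0^2 < \<zeta> * (1 - \<eta>)" .
  have alz: "\<zeta> * (1 - \<eta>) \<le> alpha k * (1 - \<eta>)" for k
    using zeta_le eta by (simp add: mult_right_mono)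
  have zz: "\<zeta>0^2 \<le> 2 * alpha k * (1 - \<eta>)" for k
  proof -
    have "0 \<le> \<nu>0 * (rho + \<nu>1)" using n0 n1 wp_pos by simp
    moreover have "0 \<le> alpha k * (1 - \<eta>)" using alpha_pos[of k] eta by simp
    moreover have "2 * alpha k * (1 - \<eta>) = 2 * (alpha k * (1 - \<eta>))" by simp
    ultimately show ?thesis using P alz[of k] by linarith
  qed
  define \<delta> where "\<delta> = 2 * \<zeta> * (1 - \<eta>) - \<zeta>0^2 - 2 * rho * \<nu>0 - \<nu>1 * \<nu>0"
  have \<delta>pos: "0 < \<delta>"
  proof -
    have "\<nu>0 * (rho + \<nu>1) = rho * \<nu>0 + \<nu>1 * \<nu>0" by (simp add: algebra_simps)
    moreover have "0 < \<nu>1 * \<nu>0" using n0 n1 by simp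
    moreover have "2 * \<zeta> * (1 - \<eta>) = 2 * (\<zeta> * (1 - \<eta>))" "2 * rho * \<nu>0 = 2 * (rho * \<nu>0)" by simp_all
    moreover have "0 \<le> \<zeta>0^2" by simp
    ultimately show ?thesis unfolding \<delta>_def using P by linarith
  qed
  have gen: "norm (u (Suc k) - s)^2 \<le> norm (u k - s)^2
      - (2 * alpha k * (1 - \<eta>) - \<zeta>0^2 - 2 * norm (u k - s) * \<nu>0 - \<nu>1 * \<nu>0) * norm (r k)^2"
    if uk: "u k \<in> Bl" and s: "s \<in> Bl" and Fs: "F s = v" for k s
  proof -
    have eqs: "u (Suc k) - s = (u k - s) - alpha k *\<^sub>R g k - h k" using it[of k] by (simp add: algebra_simps)
    have ineq: "norm ((u k - s) - alpha k *\<^sub>R g k - h k)^2 \<le> norm (u k - s)^2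
      - (2 * alpha k * (1 - \<eta>) - \<zeta>0^2 - 2 * norm (u k - s) * \<nu>0 - \<nu>1 * \<nu>0) * norm (r k)^2"
      using step_ineq[of "alpha k" "g k" \<zeta>0 "norm (r k)" \<eta> "u k - s" "h k" \<nu>0 \<nu>1]
        alpha_pos[of k] ha[of k] key[OF uk s Fs] hb[of k] zz[of k] n0 by simp
    show ?thesis unfolding eqs by (rule ineq)
  qed
  have usB: "us \<in> Bl" using us wp_pos unfolding Bl_def by auto
  have inBl: "u k \<in> Bl" if "norm (u k - us) \<le> rho" for k
  proof -
    have "dist (u 0) (u k) \<le> dist (u 0) us + dist us (u k)" by (rule dist_triangle)
    also have "\<dots> \<le> rho + rho" using us that by (simp add: dist_norm norm_minus_commute)
    finally show ?thesis unfolding Bl_def using wp_pos by simp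
  qed
  have stepU: "norm (u (Suc k) - us)^2 \<le> norm (u k - us)^2 - \<delta> * norm (r k)^2"
    if "norm (u k - us) \<le> rho" for k
  proof -
    have "\<delta> \<le> 2 * alpha k * (1 - \<eta>) - \<zeta>0^2 - 2 * norm (u k - us) * \<nu>0 - \<nu>1 * \<nu>0"
    proof -
      have "norm (u k - us) * \<nu>0 \<le> rho * \<nu>0" using that n0 by (simp add: mult_right_mono)
      moreover have "2 * \<zeta> * (1 - \<eta>) = 2 * (\<zeta> * (1 - \<eta>))" "2 * rho * \<nu>0 = 2 * (rho * \<nu>0)"
        "2 * alpha k * (1 - \<eta>) = 2 * (alpha k * (1 - \<eta>))"
        "2 * norm (u k - us) * \<nu>0 = 2 * (norm (u k - us) * \<nu>0)" by simp_all
      ultimately show ?thesis unfolding \<delta>_def using alz[of k] by linarith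
    qed
    then have "\<delta> * norm (r k)^2 \<le> (2 * alpha k * (1 - \<eta>) - \<zeta>0^2 - 2 * norm (u k - us) * \<nu>0 - \<nu>1 * \<nu>0) * norm (r k)^2"
      by (simp add: mult_right_mono)
    then show ?thesis using gen[OF inBl[OF that] usB us(2)] by linarith
  qed
  have bnd: "norm (u k - us) \<le> rho" for k
  proof (induction k)
    case 0 then show ?case using us by (simp add: dist_norm norm_minus_commute)
  next
    case (Suc k)
    have "0 \<le> \<delta> * norm (r k)^2" using \<delta>pos by simp
    then have "norm (u (Suc k) - us)^2 \<le> norm (u k - us)^2" using stepU[OF Suc] by linarith
    also have "\<dots> \<le> rho^2" by (rule power_mono[OF Suc norm_ge_zero])
    finally have "norm (u (Suc k) - us)^2 \<le> rho^2" .
    then show ?case by (rule power2_le_imp_le) (use wp_pos in linarith)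
  qed
  define E where "E k = norm (u k - us)^2" for k
  have Edec: "E (Suc k) \<le> E k - \<delta> * norm (r k)^2" for k unfolding E_def using stepU[OF bnd[of k]] .
  have "decseq E" unfolding decseq_Suc_iff
  proof
    fix k
    have "0 \<le> \<delta> * norm (r k)^2" using \<delta>pos by simp
    then show "E (Suc k) \<le> E k" using Edec[of k] by linarith
  qed
  moreover have "\<forall>k. 0 \<le> E k" unfolding E_def by simp
  ultimately obtain m where Em: "E \<longlonglongrightarrow> m" using decseq_convergent[of E 0] by blast
  have rsq: "(\<lambda>k. norm (r k)^2) \<longlonglongrightarrow> 0"
  proof (rule tendsto_sandwich[of "\<lambda>k. 0" _ _ "\<lambda>k. (E k - E (Suc k)) / \<delta>"])
    show "\<forall>\<^sub>F k in sequentially. 0 \<le> norm (r k)^2" by (rule always_eventually) simp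
    have "norm (r k)^2 \<le> (E k - E (Suc k)) / \<delta>" for k
    proof -
      have "\<delta> * norm (r k)^2 \<le> E k - E (Suc k)" using Edec[of k] by linarith
      then show ?thesis using \<delta>pos by (simp add: pos_le_divide_eq mult.commute)
    qed
    then show "\<forall>\<^sub>F k in sequentially. norm (r k)^2 \<le> (E k - E (Suc k)) / \<delta>"
      by (intro always_eventually allI)
    have ES: "(\<lambda>k. E (Suc k)) \<longlonglongrightarrow> m" using Em by (rule LIMSEQ_Suc)
    have "(\<lambda>k. E k - E (Suc k)) \<longlonglongrightarrow> m - m" using Em ES by (rule tendsto_diff)
    then have "(\<lambda>k. E k - E (Suc k)) \<longlonglongrightarrow> 0" by simp
    then show "(\<lambda>k. (E k - E (Suc k)) / \<delta>) \<longlonglongrightarrow> 0" by (rule tendsto_divide_zero)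
  qed (rule tendsto_const)
  have "(\<lambda>k. sqrt (norm (r k)^2)) \<longlonglongrightarrow> sqrt 0" by (rule tendsto_real_sqrt[OF rsq])
  then have "(\<lambda>k. norm (r k)) \<longlonglongrightarrow> 0" by simp
  then have r0: "r \<longlonglongrightarrow> 0" by (rule tendsto_norm_zero_cancel)
  have ucb: "u k \<in> cball us rho" for k using bnd[of k] by (simp add: dist_norm norm_minus_commute)
  obtain l \<sigma> where l: "l \<in> cball us rho" and \<sigma>: "strict_mono \<sigma>" and ul: "(u \<circ> \<sigma>) \<longlonglongrightarrow> l"
    using seq_compactE[OF compact_imp_seq_compact[OF compact_cball], of u] ucb by blast
  have lB: "l \<in> Bl"
  proof -
    have "dist (u 0) l \<le> dist (u 0) us + dist us l" by (rule dist_triangle)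
    also have "\<dots> \<le> rho + rho" using us l by simp
    finally show ?thesis unfolding Bl_def using wp_pos by simp
  qed
  have lip: "(1 - \<eta>) * norm (F x - F w) \<le> B * norm (x - w)" if "x \<in> Bl" "w \<in> Bl" for x w
  proof -
    have "norm (F x - F w) \<le> norm (F x - F w - blinfun_apply (F' w) (x - w)) + norm (blinfun_apply (F' w) (x - w))"
      using norm_triangle_ineq[of "F x - F w - blinfun_apply (F' w) (x - w)" "blinfun_apply (F' w) (x - w)"] by simp
    moreover have "norm (F x - F w - blinfun_apply (F' w) (x - w)) \<le> \<eta> * norm (F x - F w)"
      using A3 that unfolding Bl_def by blast
    moreover have "norm (blinfun_apply (F' w) (x - w)) \<le> norm (F' w) * norm (x - w)" by (rule norm_blinfun)
    moreover have "norm (F' w) * norm (x - w) \<le> B * norm (x - w)"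
      using A2 that unfolding Bl_def by (simp add: mult_right_mono)
    ultimately show ?thesis by (simp add: algebra_simps)
  qed
  have Fl: "F l = v"
  proof -
    have ub: "norm (F l - v) \<le> B / (1 - \<eta>) * norm (u (\<sigma> j) - l) + norm (r (\<sigma> j))" for j
    proof -
      have uj: "u (\<sigma> j) \<in> Bl" by (rule inBl[OF bnd])
      have "(1 - \<eta>) * norm (F l - F (u (\<sigma> j))) \<le> B * norm (l - u (\<sigma> j))"
        by (rule lip[OF lB uj])
      moreover have "norm (l - u (\<sigma> j)) = norm (u (\<sigma> j) - l)" by (rule norm_minus_commute)
      ultimately have "(1 - \<eta>) * norm (F l - F (u (\<sigma> j))) \<le> B * norm (u (\<sigma> j) - l)" by simp
      then have "norm (F l - F (u (\<sigma> j))) \<le> B * norm (u (\<sigma> j) - l) / (1 - \<eta>)"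
        using eta by (simp add: pos_le_divide_eq mult.commute)
      moreover have "B * norm (u (\<sigma> j) - l) / (1 - \<eta>) = B / (1 - \<eta>) * norm (u (\<sigma> j) - l)" by simp
      moreover have "norm (F l - v) = norm ((F l - F (u (\<sigma> j))) + r (\<sigma> j))" unfolding r_def by simp
      moreover have "norm ((F l - F (u (\<sigma> j))) + r (\<sigma> j)) \<le> norm (F l - F (u (\<sigma> j))) + norm (r (\<sigma> j))"
        by (rule norm_triangle_ineq)
      ultimately show ?thesis by linarith
    qed
    have "(\<lambda>j. (u \<circ> \<sigma>) j - l) \<longlonglongrightarrow> l - l" by (rule tendsto_diff[OF ul tendsto_const])
    then have "(\<lambda>j. u (\<sigma> j) - l) \<longlonglongrightarrow> 0" by (simp add: comp_def)
    then have t1: "(\<lambda>j. norm (u (\<sigma> j) - l)) \<longlonglongrightarrow> 0" by (rule tendsto_norm_zero)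
    have "(\<lambda>j. r (\<sigma> j)) \<longlonglongrightarrow> 0" using LIMSEQ_subseq_LIMSEQ[OF r0 \<sigma>] by (simp add: comp_def)
    then have t2: "(\<lambda>j. norm (r (\<sigma> j))) \<longlonglongrightarrow> 0" by (rule tendsto_norm_zero)
    have t3: "(\<lambda>j. B / (1 - \<eta>) * norm (u (\<sigma> j) - l)) \<longlonglongrightarrow> B / (1 - \<eta>) * 0"
      by (rule tendsto_mult[OF tendsto_const t1])
    have "(\<lambda>j. B / (1 - \<eta>) * norm (u (\<sigma> j) - l) + norm (r (\<sigma> j))) \<longlonglongrightarrow> B / (1 - \<eta>) * 0 + 0"
      by (rule tendsto_add[OF t3 t2])
    moreover have "\<exists>N. \<forall>n\<ge>N. norm (F l - v) \<le> B / (1 - \<eta>) * norm (u (\<sigma> n) - l) + norm (r (\<sigma> n))"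
      by (intro exI[of _ 0] allI impI ub)
    ultimately have "norm (F l - v) \<le> B / (1 - \<eta>) * 0 + 0"
      by (rule LIMSEQ_le_const)
    then show ?thesis by simp
  qed
  define C where "C = 4 * rho * \<nu>0 + \<nu>1 * \<nu>0"
  define A where "A k = norm (u k - l)^2" for k
  have Astep: "A (Suc k) \<le> A k + C * norm (r k)^2" for k
  proof -
    have nk: "norm (u k - l) \<le> 2 * rho"
    proof -
      have "norm (u k - l) \<le> norm (u k - us) + norm (us - l)"
        using norm_triangle_ineq[of "u k - us" "us - l"] by simp
      moreover have "norm (us - l) \<le> rho" using l by (simp add: dist_norm)
      ultimately show ?thesis using bnd[of k] by linarith
    qed
    have "- (2 * alpha k * (1 - \<eta>) - \<zeta>0^2 - 2 * norm (u k - l) * \<nu>0 - \<nu>1 * \<nu>0) \<le> C"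
    proof -
      have "norm (u k - l) * \<nu>0 \<le> (2 * rho) * \<nu>0" using nk n0 by (simp add: mult_right_mono)
      moreover have "2 * norm (u k - l) * \<nu>0 = 2 * (norm (u k - l) * \<nu>0)"
        "(2 * rho) * \<nu>0 = 2 * (rho * \<nu>0)" "4 * rho * \<nu>0 = 4 * (rho * \<nu>0)" by simp_all
      ultimately show ?thesis unfolding C_def using zz[of k] by linarith
    qed
    then have "- (2 * alpha k * (1 - \<eta>) - \<zeta>0^2 - 2 * norm (u k - l) * \<nu>0 - \<nu>1 * \<nu>0) * norm (r k)^2 \<le> C * norm (r k)^2"
      by (rule mult_right_mono) simp_all
    then show ?thesis using gen[OF inBl[OF bnd] lB Fl, of k] unfolding A_def by linarith
  qed
  have C0: "0 \<le> C" unfolding C_def using n0 n1 wp_pos by simp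
  define Bs where "Bs k = A k + C / \<delta> * E k" for k
  have "decseq Bs" unfolding decseq_Suc_iff
  proof
    fix k
    have "C / \<delta> * E (Suc k) \<le> C / \<delta> * (E k - \<delta> * norm (r k)^2)"
      by (rule mult_left_mono[OF Edec[of k]]) (use C0 \<delta>pos in simp)
    also have "\<dots> = C / \<delta> * E k - C * norm (r k)^2" using \<delta>pos by (simp add: algebra_simps)
    finally show "Bs (Suc k) \<le> Bs k" unfolding Bs_def using Astep[of k] by linarith
  qed
  moreover have "\<forall>k. 0 \<le> Bs k" unfolding Bs_def A_def E_def using C0 \<delta>pos by simp
  ultimately obtain b where Bb: "Bs \<longlonglongrightarrow> b" by (rule decseq_convergent)
  have "(\<lambda>k. Bs k - C / \<delta> * E k) \<longlonglongrightarrow> b - C / \<delta> * m" by (rule tendsto_diff[OF Bb tendsto_mult[OF tendsto_const Em]])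
  then have Alim: "A \<longlonglongrightarrow> b - C / \<delta> * m" unfolding Bs_def by simp
  have "(\<lambda>j. (u \<circ> \<sigma>) j - l) \<longlonglongrightarrow> l - l" by (rule tendsto_diff[OF ul tendsto_const])
    then have "(\<lambda>j. u (\<sigma> j) - l) \<longlonglongrightarrow> 0" by (simp add: comp_def)
  then have "(\<lambda>j. norm (u (\<sigma> j) - l)) \<longlonglongrightarrow> 0" by (rule tendsto_norm_zero)
  then have "(\<lambda>j. norm (u (\<sigma> j) - l)^2) \<longlonglongrightarrow> 0^2" by (rule tendsto_power)
  then have "(A \<circ> \<sigma>) \<longlonglongrightarrow> 0" unfolding A_def by (simp add: comp_def)
  moreover have "(A \<circ> \<sigma>) \<longlonglongrightarrow> b - C / \<delta> * m" using LIMSEQ_subseq_LIMSEQ[OF Alim \<sigma>] .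
  ultimately have "b - C / \<delta> * m = 0" by (rule LIMSEQ_unique[symmetric])
  then have A0: "A \<longlonglongrightarrow> 0" using Alim by simp
  have "(\<lambda>k. sqrt (A k)) \<longlonglongrightarrow> sqrt 0" by (rule tendsto_real_sqrt[OF A0])
  then have "(\<lambda>k. norm (u k - l)) \<longlonglongrightarrow> 0" unfolding A_def by simp
  then have "(\<lambda>k. u k - l) \<longlonglongrightarrow> 0" by (rule tendsto_norm_zero_cancel)
  then have "(\<lambda>k. u k - l + l) \<longlonglongrightarrow> 0 + l" by (rule tendsto_add[OF _ tendsto_const])
  then have "u \<longlonglongrightarrow> l" by simp
  moreover have "l \<in> DF" using lB dom unfolding Bl_def by (rule subsetD[rotated])
  ultimately show ?thesis using Fl by (intro exI[of _ l] conjI)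
qed

end
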